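(* Let $G$ be a matching covered graph and let $\partial(X)$ be a nontrivial tight cut of $G$. If $G$ is cycle-extendable, then both $\partial(X)$-contractions $G/X$ and $G/\overline{X}$ are also cycle-extendable.
   Context: Graphs are loopless; multiple edges allowed. A graph is matching covered if it is connected, has at least two vertices, and every edge lies in some perfect matching; it is cycle-extendable if moreover for every even cycle $C$ the graph $G-V(C)$ has a perfect matching. For $X\subseteq V(G)$, $\partial(X)$ is the set of edges with exactly one end in $X$, and $\overline X = V(G)\setminus X$; $\partial(X)$ is a tight cut if every perfect matching of $G$ contains exactly one edge of $\partial(X)$, and nontrivial if $|X|\ge2$ and $|\overline X|\ge2$. $G/X$ is obtained from $G$ by shrinking $X$ to a single new vertex (deleting edges with both ends in $X$ and keeping all other edges, possibly creating parallel edges); $G/\overline X$ is defined analogously. *)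

theory Defs
  imports Main
begin

text \<open>A finite loopless multigraph: vertex set V, edge set E (edges are abstract
  objects, so parallel edges are allowed), and ends e = the set of its two
  distinct end vertices.\<close>

definition multigraph :: "'v set \<Rightarrow> 'e set \<Rightarrow> ('e \<Rightarrow> 'v set) \<Rightarrow> bool" where
  "multigraph V E ends \<longleftrightarrow> finite V \<and> finite E \<and>
     (\<forall>e\<in>E. ends e \<subseteq> V \<and> card (ends e) = 2)"

definition adjacent :: "'v set \<Rightarrow> 'e set \<Rightarrow> ('e \<Rightarrow> 'v set) \<Rightarrow> ('v \<times> 'v) set" where
  "adjacent V E ends = {(u, v). u \<in> V \<and> v \<in> V \<and> (\<exists>e\<in>E. ends e = {u, v})}"

definition connected_graph :: "'v set \<Rightarrow> 'e set \<Rightarrow> ('e \<Rightarrow> 'v set) \<Rightarrow> bool" where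
  "connected_graph V E ends \<longleftrightarrow> V \<noteq> {} \<and>
     (\<forall>u\<in>V. \<forall>v\<in>V. (u, v) \<in> (adjacent V E ends)\<^sup>*)"

definition perfect_matching_on ::
    "'v set \<Rightarrow> 'e set \<Rightarrow> ('e \<Rightarrow> 'v set) \<Rightarrow> 'e set \<Rightarrow> bool" where
  "perfect_matching_on W E ends M \<longleftrightarrow> M \<subseteq> E \<and> (\<forall>e\<in>M. ends e \<subseteq> W) \<and>
     (\<forall>v\<in>W. \<exists>!e. e \<in> M \<and> v \<in> ends e)"

abbreviation perfect_matching ::
    "'v set \<Rightarrow> 'e set \<Rightarrow> ('e \<Rightarrow> 'v set) \<Rightarrow> 'e set \<Rightarrow> bool" where
  "perfect_matching V E ends M \<equiv> perfect_matching_on V E ends M"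

definition matching_covered :: "'v set \<Rightarrow> 'e set \<Rightarrow> ('e \<Rightarrow> 'v set) \<Rightarrow> bool" where
  "matching_covered V E ends \<longleftrightarrow> multigraph V E ends \<and> connected_graph V E ends \<and>
     card V \<ge> 2 \<and> (\<forall>e\<in>E. \<exists>M. perfect_matching V E ends M \<and> e \<in> M)"

text \<open>An even cycle of G with vertex set C: a cyclic sequence of k distinct vertices
  (k even, k \<ge> 2) joined consecutively by k distinct edges (k = 2 means two
  parallel edges).\<close>
definition even_cycle_vertices :: "'v set \<Rightarrow> 'e set \<Rightarrow> ('e \<Rightarrow> 'v set) \<Rightarrow> 'v set \<Rightarrow> bool" where
  "even_cycle_vertices V E ends C \<longleftrightarrow>
     (\<exists>vs es. length vs = length es \<and> length vs \<ge> 2 \<and> even (length vs) \<and>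
        distinct vs \<and> distinct es \<and> set vs \<subseteq> V \<and> set es \<subseteq> E \<and>
        (\<forall>i < length vs. ends (es ! i) = {vs ! i, vs ! ((i + 1) mod length vs)}) \<and>
        C = set vs)"

definition cycle_extendable :: "'v set \<Rightarrow> 'e set \<Rightarrow> ('e \<Rightarrow> 'v set) \<Rightarrow> bool" where
  "cycle_extendable V E ends \<longleftrightarrow> matching_covered V E ends \<and>
     (\<forall>C. even_cycle_vertices V E ends C \<longrightarrow>
        (\<exists>M. perfect_matching_on (V - C) E ends M))"

definition cut :: "'e set \<Rightarrow> ('e \<Rightarrow> 'v set) \<Rightarrow> 'v set \<Rightarrow> 'e set" where
  "cut E ends X = {e \<in> E. card (ends e \<inter> X) = 1}"

definition tight_cut :: "'v set \<Rightarrow> 'e set \<Rightarrow> ('e \<Rightarrow> 'v set) \<Rightarrow> 'v set \<Rightarrow> bool" where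
  "tight_cut V E ends X \<longleftrightarrow> X \<subseteq> V \<and>
     (\<forall>M. perfect_matching V E ends M \<longrightarrow> card (M \<inter> cut E ends X) = 1)"

definition nontrivial_cut :: "'v set \<Rightarrow> 'v set \<Rightarrow> bool" where
  "nontrivial_cut V X \<longleftrightarrow> card X \<ge> 2 \<and> card (V - X) \<ge> 2"

text \<open>Contraction G/X: X is shrunk to the new vertex None, other vertices v become
  Some v; edges with both ends in X are deleted, all others kept.\<close>
definition shrink :: "'v set \<Rightarrow> 'v \<Rightarrow> 'v option" where
  "shrink X v = (if v \<in> X then None else Some v)"

definition contract_V :: "'v set \<Rightarrow> 'v set \<Rightarrow> 'v option set" where
  "contract_V V X = insert None (Some ` (V - X))"

definition contract_E :: "'e set \<Rightarrow> ('e \<Rightarrow> 'v set) \<Rightarrow> 'v set \<Rightarrow> 'e set" where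
  "contract_E E ends X = {e \<in> E. \<not> ends e \<subseteq> X}"

definition contract_ends :: "('e \<Rightarrow> 'v set) \<Rightarrow> 'v set \<Rightarrow> 'e \<Rightarrow> 'v option set" where
  "contract_ends ends X e = shrink X ` ends e"

end

theory Submission
  imports Defs
begin

lemma card2_obtain:
  assumes "card S = 2" obtains a b where "a \<noteq> b" "S = {a,b}"
  using assms by (metis card_2_iff)

definition medge :: "('e \<Rightarrow> 'v set) \<Rightarrow> 'e set \<Rightarrow> 'v \<Rightarrow> 'e" where
  "medge ends M v = (THE e. e \<in> M \<and> v \<in> ends e)"

definition mate :: "('e \<Rightarrow> 'v set) \<Rightarrow> 'e set \<Rightarrow> 'v \<Rightarrow> 'v" where
  "mate ends M v = (THE w. w \<in> ends (medge ends M v) \<and> w \<noteq> v)"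

lemma medge_unique:
  assumes "perfect_matching_on W E ends M" "v \<in> W" "e \<in> M" "v \<in> ends e"
  shows "medge ends M v = e"
proof -
  have "\<exists>!e. e \<in> M \<and> v \<in> ends e" using assms unfolding perfect_matching_on_def by blast
  then show ?thesis unfolding medge_def using assms(3,4) by (metis (mono_tags, lifting) the_equality)
qed

lemma medge:
  assumes "perfect_matching_on W E ends M" "v \<in> W"
  shows "medge ends M v \<in> M" "v \<in> ends (medge ends M v)"
proof -
  have "\<exists>!e. e \<in> M \<and> v \<in> ends e" using assms unfolding perfect_matching_on_def by blast
  then have "(THE e. e \<in> M \<and> v \<in> ends e) \<in> M \<and> v \<in> ends (THE e. e \<in> M \<and> v \<in> ends e)"
    by (rule theI')
  then show "medge ends M v \<in> M" "v \<in> ends (medge ends M v)" unfolding medge_def by auto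
qed

lemma mate:
  assumes mg: "multigraph V E ends" and pm: "perfect_matching_on W E ends M" and v: "v \<in> W"
  shows "ends (medge ends M v) = {v, mate ends M v}" "mate ends M v \<noteq> v"
    "mate ends M v \<in> W" "medge ends M (mate ends M v) = medge ends M v"
    "mate ends M (mate ends M v) = v"
proof -
  let ?e = "medge ends M v"
  have eM: "?e \<in> M" and ve: "v \<in> ends ?e" using medge[OF pm v] by auto
  have "?e \<in> E" using eM pm unfolding perfect_matching_on_def by auto
  then have "card (ends ?e) = 2" using mg unfolding multigraph_def by auto
  then obtain a b where ab: "a \<noteq> b" "ends ?e = {a,b}" by (rule card2_obtain)
  then obtain w where w: "ends ?e = {v, w}" "w \<noteq> v" using ve by auto
  have mw: "mate ends M v = w" unfolding mate_def using w by auto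
  show 1: "ends ?e = {v, mate ends M v}" using w mw by simp
  show 2: "mate ends M v \<noteq> v" using w mw by simp
  show 3: "mate ends M v \<in> W" using eM pm 1 unfolding perfect_matching_on_def by auto
  show 4: "medge ends M (mate ends M v) = ?e" using medge_unique[OF pm 3 eM] 1 by auto
  have "mate ends M (mate ends M v) = (THE w. w \<in> ends ?e \<and> w \<noteq> mate ends M v)"
    using 4 by (simp only: mate_def[of ends M "mate ends M v"])
  also have "\<dots> = v" using 1 2 by auto
  finally show "mate ends M (mate ends M v) = v" .
qed

definition cyc :: "'v set \<Rightarrow> 'e set \<Rightarrow> ('e \<Rightarrow> 'v set) \<Rightarrow> nat \<Rightarrow> (nat \<Rightarrow> 'v) \<Rightarrow> (nat \<Rightarrow> 'e) \<Rightarrow> bool" where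
  "cyc V E ends n v ed \<longleftrightarrow> 2 \<le> n \<and> even n \<and> inj_on v {..<n} \<and> inj_on ed {..<n} \<and>
     v ` {..<n} \<subseteq> V \<and> ed ` {..<n} \<subseteq> E \<and> (\<forall>i<n. ends (ed i) = {v i, v (Suc i mod n)})"

lemma even_cycle_cyc:
  "even_cycle_vertices V E ends C \<longleftrightarrow> (\<exists>n v ed. cyc V E ends n v ed \<and> C = v ` {..<n})"
proof
  assume "even_cycle_vertices V E ends C"
  then obtain vs es where h: "length vs = length es" "length vs \<ge> 2" "even (length vs)"
        "distinct vs" "distinct es" "set vs \<subseteq> V" "set es \<subseteq> E"
        "\<forall>i < length vs. ends (es ! i) = {vs ! i, vs ! ((i + 1) mod length vs)}"
        "C = set vs" unfolding even_cycle_vertices_def by blast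
  have sv: "set vs = (!) vs ` {..<length vs}" by (auto simp: set_conv_nth)
  have se: "set es = (!) es ` {..<length vs}" using h(1) by (auto simp: set_conv_nth)
  have i1: "inj_on ((!) vs) {..<length vs}" using h(4) by (auto simp add: inj_on_def distinct_conv_nth)
  have i2: "inj_on ((!) es) {..<length vs}" using h(5) h(1) by (auto simp add: inj_on_def distinct_conv_nth)
  have "cyc V E ends (length vs) ((!) vs) ((!) es)"
    unfolding cyc_def using h(2,3,6,7,8) i1 i2 sv se
    by (simp del: Suc_eq_plus1)
  then show "\<exists>n v ed. cyc V E ends n v ed \<and> C = v ` {..<n}" using h(9) sv by blast
next
  assume "\<exists>n v ed. cyc V E ends n v ed \<and> C = v ` {..<n}"
  then obtain n v ed where c: "cyc V E ends n v ed" and C: "C = v ` {..<n}" by blast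
  let ?vs = "map v [0..<n]" and ?es = "map ed [0..<n]"
  have s1: "set [0..<n] = {..<n}" by auto
  show "even_cycle_vertices V E ends C"
    unfolding even_cycle_vertices_def
    apply (rule exI[of _ ?vs], rule exI[of _ ?es])
    using c C s1 unfolding cyc_def by (simp add: distinct_map)
qed

lemma cyc_shift:
  assumes c: "cyc V E ends n v ed" and r: "r < n"
  shows "cyc V E ends n (\<lambda>i. v ((i + r) mod n)) (\<lambda>i. ed ((i + r) mod n))"
    "(\<lambda>i. v ((i + r) mod n)) ` {..<n} = v ` {..<n}"
proof -
  let ?s = "\<lambda>i. (i + r) mod n"
  have n0: "n > 0" using c unfolding cyc_def by auto
  have im: "?s ` {..<n} = {..<n}"
  proof
    show "?s ` {..<n} \<subseteq> {..<n}" using n0 by auto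
    show "{..<n} \<subseteq> ?s ` {..<n}"
    proof
      fix j assume j: "j \<in> {..<n}"
      have "((j + (n - r)) mod n + r) mod n = j" using j r by (simp add: mod_add_left_eq)
      moreover have "(j + (n - r)) mod n \<in> {..<n}" using n0 by auto
      ultimately show "j \<in> ?s ` {..<n}" by (metis image_eqI)
    qed
  qed
  have inj: "inj_on ?s {..<n}"
    by (rule eq_card_imp_inj_on) (use im in auto)
  have im2: "(\<lambda>i. v ((i + r) mod n)) ` {..<n} = v ` {..<n}"
    using im image_comp[of v ?s "{..<n}"] unfolding comp_def by simp
  show "(\<lambda>i. v ((i + r) mod n)) ` {..<n} = v ` {..<n}" by (rule im2)
  show "cyc V E ends n (\<lambda>i. v ((i + r) mod n)) (\<lambda>i. ed ((i + r) mod n))"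
    unfolding cyc_def
  proof (intro conjI allI impI)
    show "2 \<le> n" "even n" using c unfolding cyc_def by auto
    show "inj_on (\<lambda>i. v ((i + r) mod n)) {..<n}"
      using comp_inj_on[OF inj, of v] c im unfolding cyc_def comp_def by simp
    show "inj_on (\<lambda>i. ed ((i + r) mod n)) {..<n}"
      using comp_inj_on[OF inj, of ed] c im unfolding cyc_def comp_def by simp
    show "(\<lambda>i. v ((i + r) mod n)) ` {..<n} \<subseteq> V" using im2 c unfolding cyc_def by auto
    show "(\<lambda>i. ed ((i + r) mod n)) ` {..<n} \<subseteq> E"
      using c im image_comp[of ed ?s "{..<n}"] unfolding cyc_def comp_def by simp
    fix i assume "i < n"
    have "(i + r) mod n < n" using n0 by auto
    then have "ends (ed ((i + r) mod n)) = {v ((i + r) mod n), v (Suc ((i + r) mod n) mod n)}"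
      using c unfolding cyc_def by blast
    also have "Suc ((i + r) mod n) mod n = (Suc i + r) mod n" by (simp add: mod_Suc_eq)
    also have "(Suc i + r) mod n = (Suc i mod n + r) mod n" by (simp add: mod_add_left_eq)
    finally show "ends (ed ((i + r) mod n)) = {v ((i + r) mod n), v ((Suc i mod n + r) mod n)}" .
  qed
qed

lemma cyc_match:
  assumes c: "cyc V E ends n v ed"
  shows "perfect_matching_on (v ` {..<n}) E ends (ed ` {i. i < n \<and> even i})"
proof -
  have n2: "2 \<le> n" and ev: "even n" and iv: "inj_on v {..<n}" and sE: "ed ` {..<n} \<subseteq> E"
    and en: "\<forall>i<n. ends (ed i) = {v i, v (Suc i mod n)}" using c unfolding cyc_def by auto
  have key: "i = (if even j then j else j - 1)"
    if "i < n" "even i" "j < n" "v j \<in> ends (ed i)" for i j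
  proof -
    have "v j = v i \<or> v j = v (Suc i mod n)" using en that by auto
    moreover have "Suc i mod n < n" using n2 by auto
    ultimately have "j = i \<or> j = Suc i mod n" using iv that unfolding inj_on_def by auto
    moreover have "Suc i mod n = (if Suc i < n then Suc i else 0)"
    proof (cases "Suc i < n")
      case False then have "Suc i = n" using that(1) by simp
      then show ?thesis by simp
    qed simp
    moreover have "Suc i \<noteq> n" using that(2) ev by auto
    ultimately show ?thesis using that(1,2) by (auto split: if_splits)
  qed
  show ?thesis unfolding perfect_matching_on_def
  proof (intro conjI ballI)
    show "ed ` {i. i < n \<and> even i} \<subseteq> E" using sE by auto
  next
    fix e assume "e \<in> ed ` {i. i < n \<and> even i}"
    then obtain i where "i < n" "e = ed i" by auto
    moreover have "Suc i mod n < n" using n2 by auto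
    ultimately show "ends e \<subseteq> v ` {..<n}" using en by auto
  next
    fix w assume "w \<in> v ` {..<n}"
    then obtain j where j: "j < n" "w = v j" by auto
    let ?i = "if even j then j else j - 1"
    have i: "?i < n" "even ?i" using j by auto
    have A: "w \<in> ends (ed ?i)"
    proof (cases "even j")
      case True then show ?thesis using en j by auto
    next
      case False
      then have "j \<ge> 1" by (cases j) auto
      then have "Suc (j - 1) mod n = j" using j by auto
      have "j - 1 < n" using j by auto
      then have "ends (ed (j - 1)) = {v (j - 1), v j}" using en \<open>Suc (j - 1) mod n = j\<close> by metis
      then show ?thesis using j False by simp
    qed
    have B: "e = ed ?i" if e1: "e \<in> ed ` {i. i < n \<and> even i}" and e2: "w \<in> ends e" for e
    proof -
      obtain i where "e = ed i" "i < n" "even i" using e1 by auto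
      then show ?thesis using key[of i j] j e2 by simp
    qed
    have C: "ed ?i \<in> ed ` {i. i < n \<and> even i}" using i by blast
    show "\<exists>!e. e \<in> ed ` {i. i < n \<and> even i} \<and> w \<in> ends e"
    proof (rule ex1I[of _ "ed ?i"])
      show "ed ?i \<in> ed ` {i. i < n \<and> even i} \<and> w \<in> ends (ed ?i)" using A C by simp
    next
      fix e assume "e \<in> ed ` {i. i < n \<and> even i} \<and> w \<in> ends e"
      then show "e = ed ?i" using B by blast
    qed
  qed
qed

lemma pm_union:
  assumes "perfect_matching_on A E ends M1" "perfect_matching_on B E ends M2" "A \<inter> B = {}"
  shows "perfect_matching_on (A \<union> B) E ends (M1 \<union> M2)"
  unfolding perfect_matching_on_def
proof (intro conjI ballI)
  show "M1 \<union> M2 \<subseteq> E" using assms unfolding perfect_matching_on_def by auto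
next
  fix e assume "e \<in> M1 \<union> M2"
  then show "ends e \<subseteq> A \<union> B" using assms unfolding perfect_matching_on_def by auto
next
  fix v assume v: "v \<in> A \<union> B"
  show "\<exists>!e. e \<in> M1 \<union> M2 \<and> v \<in> ends e"
  proof (cases "v \<in> A")
    case True
    then have "v \<notin> B" using assms(3) by auto
    then have "\<forall>e\<in>M2. v \<notin> ends e" using assms(2) unfolding perfect_matching_on_def by auto
    moreover have "\<exists>!e. e \<in> M1 \<and> v \<in> ends e" using True assms(1) unfolding perfect_matching_on_def by auto
    ultimately show ?thesis by blast
  next
    case False
    then have "v \<in> B" using v by auto
    have "\<forall>e\<in>M1. v \<notin> ends e" using False assms(1) unfolding perfect_matching_on_def by auto
    moreover have "\<exists>!e. e \<in> M2 \<and> v \<in> ends e" using \<open>v \<in> B\<close> assms(2) unfolding perfect_matching_on_def by auto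
    ultimately show ?thesis by blast
  qed
qed

lemma cut_iff:
  assumes "multigraph V E ends" "f \<in> E"
  shows "f \<in> cut E ends X \<longleftrightarrow> ends f \<inter> X \<noteq> {} \<and> \<not> ends f \<subseteq> X"
proof -
  have "card (ends f) = 2" using assms unfolding multigraph_def by auto
  then obtain a b where ab: "a \<noteq> b" "ends f = {a,b}" by (metis card_2_iff)
  have "card ({a,b} \<inter> X) = 1 \<longleftrightarrow> {a,b} \<inter> X \<noteq> {} \<and> \<not> {a,b} \<subseteq> X"
  proof (cases "a \<in> X")
    case True
    then show ?thesis using ab(1) by (cases "b \<in> X") auto
  next
    case False
    then show ?thesis using ab(1) by (cases "b \<in> X") auto
  qed
  then show ?thesis unfolding cut_def using assms(2) ab(2) by simp
qed

lemma shrink_None: "None \<in> shrink X ` S \<longleftrightarrow> S \<inter> X \<noteq> {}"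
  unfolding shrink_def by force

lemma shrink_Some: "Some v \<in> shrink X ` S \<longleftrightarrow> v \<in> S \<and> v \<notin> X"
  unfolding shrink_def by force

lemma pm_contract_basic:
  assumes mg: "multigraph V E ends" and pm: "perfect_matching_on W E ends N"
    and v: "v \<in> W" "v \<notin> X"
  shows "\<exists>!f. f \<in> {f \<in> N. \<not> ends f \<subseteq> X} \<and> Some v \<in> contract_ends ends X f"
proof -
  have eq: "(f \<in> {f \<in> N. \<not> ends f \<subseteq> X} \<and> Some v \<in> contract_ends ends X f) \<longleftrightarrow>
      (f \<in> N \<and> v \<in> ends f)" for f
    using v(2) unfolding contract_ends_def shrink_Some by auto
  have "\<exists>!f. f \<in> N \<and> v \<in> ends f" using pm v(1) unfolding perfect_matching_on_def by auto
  then show ?thesis unfolding eq .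
qed

lemma pm_contract_true:
  assumes mg: "multigraph V E ends" and pm: "perfect_matching_on W E ends N"
    and cc: "card (N \<inter> cut E ends X) = 1"
  shows "perfect_matching_on (insert None (Some ` (W - X))) (contract_E E ends X)
           (contract_ends ends X) {f \<in> N. \<not> ends f \<subseteq> X}"
  unfolding perfect_matching_on_def
proof (intro conjI ballI)
  have NE: "N \<subseteq> E" using pm unfolding perfect_matching_on_def by auto
  show "{f \<in> N. \<not> ends f \<subseteq> X} \<subseteq> contract_E E ends X"
    using NE unfolding contract_E_def by auto
next
  fix f assume f: "f \<in> {f \<in> N. \<not> ends f \<subseteq> X}"
  then have "ends f \<subseteq> W" using pm unfolding perfect_matching_on_def by auto
  then show "contract_ends ends X f \<subseteq> insert None (Some ` (W - X))"
    unfolding contract_ends_def shrink_def by auto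
next
  fix t assume t: "t \<in> insert None (Some ` (W - X))"
  have NE: "N \<subseteq> E" using pm unfolding perfect_matching_on_def by auto
  show "\<exists>!f. f \<in> {f \<in> N. \<not> ends f \<subseteq> X} \<and> t \<in> contract_ends ends X f"
  proof (cases t)
    case None
    obtain f0 where f0: "N \<inter> cut E ends X = {f0}" using cc by (metis card_1_singletonE)
    have eq: "(f \<in> {f \<in> N. \<not> ends f \<subseteq> X} \<and> None \<in> contract_ends ends X f) \<longleftrightarrow> f = f0" for f
    proof -
      have "(f \<in> {f \<in> N. \<not> ends f \<subseteq> X} \<and> None \<in> contract_ends ends X f) \<longleftrightarrow>
            f \<in> N \<inter> cut E ends X"
        using cut_iff[OF mg, of f X] NE unfolding contract_ends_def shrink_None by auto
      then show ?thesis using f0 by auto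
    qed
    show ?thesis unfolding None eq by auto
  next
    case (Some v)
    then have "v \<in> W" "v \<notin> X" using t by auto
    then show ?thesis unfolding Some by (rule pm_contract_basic[OF mg pm])
  qed
qed

lemma pm_contract_false:
  assumes mg: "multigraph V E ends" and pm: "perfect_matching_on W E ends N"
    and cc: "N \<inter> cut E ends X = {}"
  shows "perfect_matching_on (Some ` (W - X)) (contract_E E ends X)
           (contract_ends ends X) {f \<in> N. \<not> ends f \<subseteq> X}"
  unfolding perfect_matching_on_def
proof (intro conjI ballI)
  have NE: "N \<subseteq> E" using pm unfolding perfect_matching_on_def by auto
  show "{f \<in> N. \<not> ends f \<subseteq> X} \<subseteq> contract_E E ends X"
    using NE unfolding contract_E_def by auto
next
  fix f assume f: "f \<in> {f \<in> N. \<not> ends f \<subseteq> X}"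
  have NE: "N \<subseteq> E" using pm unfolding perfect_matching_on_def by auto
  have W: "ends f \<subseteq> W" using f pm unfolding perfect_matching_on_def by auto
  have "f \<notin> cut E ends X" using f cc by auto
  then have "ends f \<inter> X = {}" using cut_iff[OF mg, of f X] f NE by auto
  then show "contract_ends ends X f \<subseteq> Some ` (W - X)"
    using W unfolding contract_ends_def shrink_def by auto
next
  fix t assume t: "t \<in> Some ` (W - X)"
  then obtain v where "t = Some v" "v \<in> W" "v \<notin> X" by auto
  then show "\<exists>!f. f \<in> {f \<in> N. \<not> ends f \<subseteq> X} \<and> t \<in> contract_ends ends X f"
    using pm_contract_basic[OF mg pm] by simp
qed

lemma contract_multigraph:
  assumes mg: "multigraph V E ends"
  shows "multigraph (contract_V V X) (contract_E E ends X) (contract_ends ends X)"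
  unfolding multigraph_def
proof (intro conjI ballI)
  show "finite (contract_V V X)" using mg unfolding multigraph_def contract_V_def by auto
  show "finite (contract_E E ends X)" using mg unfolding multigraph_def contract_E_def by auto
next
  fix e assume e: "e \<in> contract_E E ends X"
  then have eE: "e \<in> E" and nX: "\<not> ends e \<subseteq> X" unfolding contract_E_def by auto
  have "card (ends e) = 2" "ends e \<subseteq> V" using mg eE unfolding multigraph_def by auto
  then obtain a b where ab: "a \<noteq> b" "ends e = {a,b}" "a \<in> V" "b \<in> V"
    by (metis card_2_iff insert_subset)
  show "contract_ends ends X e \<subseteq> contract_V V X"
    using ab unfolding contract_ends_def contract_V_def shrink_def by auto
  have "shrink X a \<noteq> shrink X b" using ab nX unfolding shrink_def by auto
  then show "card (contract_ends ends X e) = 2" unfolding contract_ends_def ab by simp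
qed

lemma contract_path:
  assumes mg: "multigraph V E ends" and "(a, b) \<in> (adjacent V E ends)\<^sup>*"
  shows "(shrink X a, shrink X b) \<in> (adjacent (contract_V V X) (contract_E E ends X) (contract_ends ends X))\<^sup>*"
  using assms(2)
proof (induction rule: rtrancl_induct)
  case base then show ?case by simp
next
  case (step b c)
  from step(2) obtain e where bc: "b \<in> V" "c \<in> V" "e \<in> E" "ends e = {b, c}"
    unfolding adjacent_def by auto
  show ?case
  proof (cases "b \<in> X \<and> c \<in> X")
    case True
    then have "shrink X c = shrink X b" unfolding shrink_def by auto
    then show ?thesis using step(3) by simp
  next
    case False
    then have "e \<in> contract_E E ends X" using bc unfolding contract_E_def by auto
    moreover have "contract_ends ends X e = {shrink X b, shrink X c}"
      unfolding contract_ends_def bc by simp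
    moreover have "shrink X b \<in> contract_V V X" "shrink X c \<in> contract_V V X"
      using bc unfolding contract_V_def shrink_def by auto
    ultimately have "(shrink X b, shrink X c) \<in> adjacent (contract_V V X) (contract_E E ends X) (contract_ends ends X)"
      unfolding adjacent_def by blast
    then show ?thesis using step(3) by (rule rtrancl_into_rtrancl[rotated])
  qed
qed

lemma contract_connected:
  assumes mg: "multigraph V E ends" and cg: "connected_graph V E ends" and X: "X \<subseteq> V" "X \<noteq> {}"
  shows "connected_graph (contract_V V X) (contract_E E ends X) (contract_ends ends X)"
  unfolding connected_graph_def
proof (intro conjI ballI)
  show "contract_V V X \<noteq> {}" unfolding contract_V_def by auto
  obtain x0 where x0: "x0 \<in> X" using X by auto
  have rep: "\<exists>a\<in>V. shrink X a = t" if "t \<in> contract_V V X" for t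
  proof (cases t)
    case None then show ?thesis using x0 X unfolding shrink_def by auto
  next
    case (Some v) then show ?thesis using that unfolding contract_V_def shrink_def by auto
  qed
  fix s t assume "s \<in> contract_V V X" "t \<in> contract_V V X"
  then obtain a b where "a \<in> V" "b \<in> V" "shrink X a = s" "shrink X b = t" using rep by metis
  then show "(s, t) \<in> (adjacent (contract_V V X) (contract_E E ends X) (contract_ends ends X))\<^sup>*"
    using contract_path[OF mg, of a b X] cg unfolding connected_graph_def by auto
qed


lemma alt_path:
  assumes mg: "multigraph V E ends" and X: "X \<subseteq> V"
    and p1: "perfect_matching_on V E ends M1" and p2: "perfect_matching_on V E ends M2"
    and x1: "x1 \<in> X" and x2: "x2 \<in> X"
    and h1: "\<forall>e\<in>M1. \<not> ends e \<subseteq> X \<longrightarrow> ends e \<inter> X \<subseteq> {x1}"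
    and h2: "\<forall>e\<in>M2. \<not> ends e \<subseteq> X \<longrightarrow> ends e \<inter> X \<subseteq> {x2}"
    and g1: "\<not> ends (medge ends M1 x1) \<subseteq> X"
    and g2: "\<not> ends (medge ends M2 x2) \<subseteq> X"
  shows "\<exists>L z p. even L \<and> z 0 = x2 \<and> z L = x1 \<and> inj_on z {..L} \<and> z ` {..L} \<subseteq> X \<and>
           (\<forall>j<L. p j \<in> E \<and> ends (p j) = {z j, z (Suc j)})"
proof -
  define Mp where "Mp j = (if even j then M1 else M2)" for j :: nat
  define z where "z = rec_nat x2 (\<lambda>j w. mate ends (Mp j) w)"
  have z0: "z 0 = x2" and zS: "z (Suc j) = mate ends (Mp j) (z j)" for j by (simp_all add: z_def)
  have pM: "perfect_matching_on V E ends (Mp j)" for j using p1 p2 unfolding Mp_def by auto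
  have finX: "finite X" using mg X unfolding multigraph_def by (auto intro: finite_subset)
  have fin1: "mate ends M1 w \<in> X" if "w \<in> X" "w \<noteq> x1" for w
  proof (rule ccontr)
    assume a: "mate ends M1 w \<notin> X"
    have wV: "w \<in> V" using that X by auto
    have "ends (medge ends M1 w) = {w, mate ends M1 w}" "medge ends M1 w \<in> M1"
      using mate[OF mg p1 wV] medge[OF p1 wV] by auto
    then show False using h1 a that by auto
  qed
  have fin2: "mate ends M2 w \<in> X" if "w \<in> X" "w \<noteq> x2" for w
  proof (rule ccontr)
    assume a: "mate ends M2 w \<notin> X"
    have wV: "w \<in> V" using that X by auto
    have "ends (medge ends M2 w) = {w, mate ends M2 w}" "medge ends M2 w \<in> M2"
      using mate[OF mg p2 wV] medge[OF p2 wV] by auto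
    then show False using h2 a that by auto
  qed
  have nx1: "mate ends M1 w \<noteq> x1" if "w \<in> X" for w
  proof
    assume a: "mate ends M1 w = x1"
    have wV: "w \<in> V" using that X by auto
    have "medge ends M1 x1 = medge ends M1 w" using mate(4)[OF mg p1 wV] a by simp
    moreover have "ends (medge ends M1 w) = {w, x1}" using mate(1)[OF mg p1 wV] a by simp
    ultimately show False using g1 that x1 by auto
  qed
  have nx2: "mate ends M2 w \<noteq> x2" if "w \<in> X" for w
  proof
    assume a: "mate ends M2 w = x2"
    have wV: "w \<in> V" using that X by auto
    have "medge ends M2 x2 = medge ends M2 w" using mate(4)[OF mg p2 wV] a by simp
    moreover have "ends (medge ends M2 w) = {w, x2}" using mate(1)[OF mg p2 wV] a by simp
    ultimately show False using g2 that x2 by auto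
  qed
  define I where "I j \<longleftrightarrow> (\<forall>i\<le>j. z i \<in> X) \<and> inj_on z {..j} \<and> (\<forall>i<j. z i \<noteq> x1)" for j
  have step: "I (Suc j)" if Ij: "I j" and ne: "z j \<noteq> x1" for j
  proof -
    have zX: "\<forall>i\<le>j. z i \<in> X" and inj: "inj_on z {..j}" and nx: "\<forall>i<j. z i \<noteq> x1"
      using Ij unfolding I_def by auto
    have zjX: "z j \<in> X" using zX by auto
    have zV: "z i \<in> V" if "i \<le> j" for i using zX that X by auto
    have yX: "z (Suc j) \<in> X"
    proof (cases "even j")
      case True
      then show ?thesis using fin1[OF zjX ne] zS[of j] unfolding Mp_def by simp
    next
      case False
      then have "j \<noteq> 0" using odd_pos by auto
      then have "z j \<noteq> z 0" using inj unfolding inj_on_def by auto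
      then show ?thesis using fin2[OF zjX] zS[of j] False z0 unfolding Mp_def by simp
    qed
    have ynew: "z (Suc j) \<noteq> z i" if "i \<le> j" for i
    proof
      assume eq: "z (Suc j) = z i"
      show False
      proof (cases "i = j")
        case True
        then show False using eq zS[of j] mate(2)[OF mg pM zV[of j]] by simp
      next
        case ij: False
        show False
        proof (cases i)
          case 0
          show False
          proof (cases "even j")
            case False
            then show False using eq 0 z0 zS[of j] nx2[OF zjX] unfolding Mp_def by simp
          next
            case True
            then have j0: "j \<noteq> 0" using ij 0 by auto
            have "mate ends M1 (z j) = z 0" using eq 0 zS[of j] True unfolding Mp_def by simp
            then have "z j = mate ends M1 (z 0)"
              using mate(5)[OF mg p1 zV[of j]] by (metis order_refl)
            also have "\<dots> = z 1" using zS[of 0] unfolding Mp_def by simp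
            finally have "j = 1" using inj j0 unfolding inj_on_def by auto
            then show False using True by simp
          qed
        next
          case (Suc i')
          have i'j: "i' < j" using Suc that by auto
          have zi: "z i = mate ends (Mp i') (z i')" using zS[of i'] Suc by simp
          show False
          proof (cases "even i' = even j")
            case True
            then have "Mp i' = Mp j" unfolding Mp_def by simp
            then have "mate ends (Mp j) (z j) = mate ends (Mp j) (z i')" using eq zi zS[of j] by simp
            then have E0: "mate ends (Mp j) (z j) = mate ends (Mp j) (z i')" .
            have "z j = mate ends (Mp j) (mate ends (Mp j) (z j))"
              by (rule mate(5)[OF mg pM[of j] zV[of j], symmetric]) simp
            also have "\<dots> = mate ends (Mp j) (mate ends (Mp j) (z i'))" by (simp only: E0)
            also have "\<dots> = z i'" by (rule mate(5)[OF mg pM[of j] zV[of i']]) (use i'j in simp)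
            finally have "z j = z i'" .
            moreover have "j \<in> {..j}" "i' \<in> {..j}" using i'j by auto
            ultimately have "j = i'" using inj unfolding inj_on_def by blast
            then show False using i'j by simp
          next
            case False
            then have par: "even i = even j" using Suc by simp
            then have "Mp i = Mp j" unfolding Mp_def by simp
            then have "z (Suc i) = mate ends (Mp j) (z (Suc j))" using zS[of i] eq by simp
            also have "\<dots> = z j" using zS[of j] mate(5)[OF mg pM zV[of j]] by simp
            finally have "Suc i = j" using inj that ij unfolding inj_on_def by auto
            then show False using par by presburger
          qed
        qed
      qed
    qed
    have "inj_on z {..Suc j}"
      unfolding atMost_Suc using inj ynew by (auto simp: inj_on_insert)
    moreover have "\<forall>i\<le>Suc j. z i \<in> X" using zX yX by (auto simp: le_Suc_eq)
    moreover have "\<forall>i<Suc j. z i \<noteq> x1" using nx ne by (auto simp: less_Suc_eq)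
    ultimately show ?thesis unfolding I_def by auto
  qed
  have I0: "I 0" unfolding I_def using z0 x2 by auto
  have ex: "\<exists>j. z j = x1"
  proof (rule ccontr)
    assume "\<not> (\<exists>j. z j = x1)"
    then have "I j" for j using I0 step by (induction j) auto
    then have "inj_on z {..card X}" "z ` {..card X} \<subseteq> X" unfolding I_def by auto
    then have "card {..card X} \<le> card X" using card_inj_on_le finX by blast
    then show False by simp
  qed
  define L where "L = (LEAST j. z j = x1)"
  have zL: "z L = x1" unfolding L_def using ex by (rule LeastI_ex)
  have IL: "I j" if "j \<le> L" for j
    using that
  proof (induction j)
    case 0 show ?case by (rule I0)
  next
    case (Suc j)
    then have "j < (LEAST j. z j = x1)" unfolding L_def by simp
    then have "z j \<noteq> x1" by (rule not_less_Least)
    then show ?case using Suc step by auto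
  qed
  have ILL: "I L" using IL by auto
  have evL: "even L"
  proof (rule ccontr)
    assume "odd L"
    then obtain m where m: "L = Suc m" "even m" by (cases L) auto
    have "z m \<in> X" using ILL m unfolding I_def by auto
    moreover have "z L = mate ends M1 (z m)" using zS[of m] m unfolding Mp_def by simp
    ultimately show False using nx1 zL by auto
  qed
  define p where "p j = medge ends (Mp j) (z j)" for j
  have pj: "p j \<in> E \<and> ends (p j) = {z j, z (Suc j)}" if "j < L" for j
  proof -
    have "z j \<in> V" using ILL that X unfolding I_def by auto
    then show ?thesis
      using medge(1)[OF pM] mate(1)[OF mg pM] zS[of j] pM[of j] unfolding p_def perfect_matching_on_def
      by auto
  qed
  show ?thesis
    apply (rule exI[of _ L], rule exI[of _ z], rule exI[of _ p])
    using evL z0 zL ILL pj unfolding I_def by auto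
qed


lemma edge_some:
  assumes mg: "multigraph V E ends" and f: "f \<in> E" and c: "contract_ends ends X f = {Some a, Some b}"
  shows "ends f = {a, b} \<and> a \<notin> X \<and> b \<notin> X"
proof -
  have "None \<notin> shrink X ` ends f" using c unfolding contract_ends_def by auto
  then have d: "ends f \<inter> X = {}" unfolding shrink_None by simp
  then have "shrink X ` ends f = Some ` ends f" unfolding shrink_def by (auto simp: image_def)
  then have "Some ` ends f = Some ` {a, b}" using c unfolding contract_ends_def by simp
  then have "ends f = {a, b}" using inj_image_eq_iff[OF inj_Some[of UNIV]] by metis
  then show ?thesis using d by auto
qed

lemma edge_none:
  assumes mg: "multigraph V E ends" and f: "f \<in> E" and c: "contract_ends ends X f = {None, Some u}"
  shows "\<exists>a\<in>X. ends f = {a, u} \<and> u \<notin> X"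
proof -
  have "card (ends f) = 2" using mg f unfolding multigraph_def by auto
  then obtain c d where cd: "c \<noteq> d" "ends f = {c, d}" by (rule card2_obtain)
  have s: "{shrink X c, shrink X d} = {None, Some u}" using c cd unfolding contract_ends_def by simp
  show ?thesis
  proof (cases "c \<in> X")
    case True
    show ?thesis
    proof (cases "d \<in> X")
      case True
      then show ?thesis using s \<open>c \<in> X\<close> unfolding shrink_def by auto
    next
      case False
      then have "d = u" using s True unfolding shrink_def by (auto simp: doubleton_eq_iff)
      then show ?thesis using True False cd by auto
    qed
  next
    case False
    show ?thesis
    proof (cases "d \<in> X")
      case True
      then have "c = u" using s False unfolding shrink_def by (auto simp: doubleton_eq_iff)
      then show ?thesis using True False cd by auto
    next
      case dX: False
      then show ?thesis using s False unfolding shrink_def by (auto simp: doubleton_eq_iff)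
    qed
  qed
qed

lemma contract_mc:
  assumes mc: "matching_covered V E ends" and tc: "tight_cut V E ends X"
    and X: "X \<noteq> {}" "V - X \<noteq> {}"
  shows "matching_covered (contract_V V X) (contract_E E ends X) (contract_ends ends X)"
proof -
  have mg: "multigraph V E ends" and cg: "connected_graph V E ends"
    and ev: "\<forall>e\<in>E. \<exists>M. perfect_matching V E ends M \<and> e \<in> M"
    using mc unfolding matching_covered_def by auto
  have XV: "X \<subseteq> V" using tc unfolding tight_cut_def by auto
  have m2: "multigraph (contract_V V X) (contract_E E ends X) (contract_ends ends X)"
    by (rule contract_multigraph[OF mg])
  obtain v where v: "v \<in> V" "v \<notin> X" using X by auto
  have "{None, Some v} \<subseteq> contract_V V X" using v unfolding contract_V_def by auto
  moreover have "finite (contract_V V X)" using m2 unfolding multigraph_def by auto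
  ultimately have "card {None, Some v} \<le> card (contract_V V X)" by (rule card_mono[rotated])
  then have c2: "card (contract_V V X) \<ge> 2" by simp
  have "\<exists>M. perfect_matching (contract_V V X) (contract_E E ends X) (contract_ends ends X) M \<and> e \<in> M"
    if e: "e \<in> contract_E E ends X" for e
  proof -
    have "e \<in> E" "\<not> ends e \<subseteq> X" using e unfolding contract_E_def by auto
    then obtain M where M: "perfect_matching V E ends M" "e \<in> M" using ev by auto
    have "card (M \<inter> cut E ends X) = 1" using tc M unfolding tight_cut_def by auto
    from pm_contract_true[OF mg M(1) this]
    have "perfect_matching (contract_V V X) (contract_E E ends X) (contract_ends ends X) {f \<in> M. \<not> ends f \<subseteq> X}"
      unfolding contract_V_def .
    then show ?thesis using M(2) \<open>\<not> ends e \<subseteq> X\<close> by blast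
  qed
  then show ?thesis unfolding matching_covered_def
    using m2 contract_connected[OF mg cg XV X(1)] c2 by blast
qed

lemma tight_compl:
  assumes mg: "multigraph V E ends" and tc: "tight_cut V E ends X"
  shows "tight_cut V E ends (V - X)"
proof -
  have "cut E ends (V - X) = cut E ends X"
  proof (intro set_eqI iffI)
    fix f assume f: "f \<in> cut E ends (V - X)"
    then have fE: "f \<in> E" unfolding cut_def by auto
    then have "ends f \<subseteq> V" using mg unfolding multigraph_def by auto
    then show "f \<in> cut E ends X" using f cut_iff[OF mg fE, of X] cut_iff[OF mg fE, of "V - X"] by auto
  next
    fix f assume f: "f \<in> cut E ends X"
    then have fE: "f \<in> E" unfolding cut_def by auto
    then have "ends f \<subseteq> V" using mg unfolding multigraph_def by auto
    then show "f \<in> cut E ends (V - X)" using f cut_iff[OF mg fE, of X] cut_iff[OF mg fE, of "V - X"] by auto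
  qed
  then show ?thesis using tc unfolding tight_cut_def by auto
qed


lemma lift_cycle_some:
  assumes ce: "cycle_extendable V E ends" and tc: "tight_cut V E ends X"
    and cy: "cyc (contract_V V X) (contract_E E ends X) (contract_ends ends X) k vs es"
    and nn: "None \<notin> vs ` {..<k}"
  shows "\<exists>M. perfect_matching_on (contract_V V X - vs ` {..<k}) (contract_E E ends X) (contract_ends ends X) M"
proof -
  have mc: "matching_covered V E ends" using ce unfolding cycle_extendable_def by auto
  then have mg: "multigraph V E ends" unfolding matching_covered_def by auto
  have k2: "2 \<le> k" and evk: "even k" and ivs: "inj_on vs {..<k}" and ies: "inj_on es {..<k}"
    and vsV: "vs ` {..<k} \<subseteq> contract_V V X" and esE: "es ` {..<k} \<subseteq> contract_E E ends X"
    and en: "\<forall>i<k. contract_ends ends X (es i) = {vs i, vs (Suc i mod k)}"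
    using cy unfolding cyc_def by auto
  define v where "v i = the (vs i)" for i
  have vsS: "vs i = Some (v i) \<and> v i \<in> V - X" if "i < k" for i
  proof -
    have a: "vs i \<in> contract_V V X" using vsV that by auto
    have b: "vs i \<noteq> None" using nn that by (metis image_eqI lessThan_iff)
    from a b show ?thesis unfolding v_def contract_V_def by auto
  qed
  have k0: "0 < k" using k2 by auto
  have cV: "cyc V E ends k v es" unfolding cyc_def
  proof (intro conjI allI impI)
    show "2 \<le> k" "even k" "inj_on es {..<k}" by (fact k2, fact evk, fact ies)
    show "inj_on v {..<k}"
    proof (rule inj_onI)
      fix i j assume "i \<in> {..<k}" "j \<in> {..<k}" "v i = v j"
      then have "vs i = vs j" using vsS by auto
      then show "i = j" using ivs \<open>i \<in> {..<k}\<close> \<open>j \<in> {..<k}\<close> unfolding inj_on_def by blast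
    qed
    show "v ` {..<k} \<subseteq> V" using vsS by auto
    show "es ` {..<k} \<subseteq> E" using esE unfolding contract_E_def by auto
    fix i assume i: "i < k"
    have "Suc i mod k < k" using k0 by auto
    then have "contract_ends ends X (es i) = {Some (v i), Some (v (Suc i mod k))}"
      using en vsS i by auto
    moreover have "es i \<in> E" using esE i unfolding contract_E_def by auto
    ultimately show "ends (es i) = {v i, v (Suc i mod k)}" using edge_some[OF mg] by blast
  qed
  define C0 where "C0 = v ` {..<k}"
  have "even_cycle_vertices V E ends C0" unfolding even_cycle_cyc C0_def using cV by blast
  then obtain N where N: "perfect_matching_on (V - C0) E ends N"
    using ce unfolding cycle_extendable_def by blast
  define MC where "MC = es ` {i. i < k \<and> even i}"
  have MC: "perfect_matching_on C0 E ends MC" unfolding MC_def C0_def by (rule cyc_match[OF cV])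
  have C0V: "C0 \<subseteq> V" using cV unfolding cyc_def C0_def by auto
  have "perfect_matching_on ((V - C0) \<union> C0) E ends (N \<union> MC)" by (rule pm_union[OF N MC]) auto
  moreover have "(V - C0) \<union> C0 = V" using C0V by auto
  ultimately have "perfect_matching V E ends (N \<union> MC)" by simp
  then have c1: "card ((N \<union> MC) \<inter> cut E ends X) = 1" using tc unfolding tight_cut_def by auto
  have "MC \<inter> cut E ends X = {}"
  proof -
    have "f \<notin> cut E ends X" if f: "f \<in> MC" for f
    proof -
      obtain i where i: "i < k" "f = es i" using f unfolding MC_def by auto
      have "Suc i mod k < k" using k0 by auto
      then have "ends f \<inter> X = {}" using cV i vsS unfolding cyc_def by auto
      then show ?thesis using cut_iff[OF mg, of f X] unfolding cut_def by auto
    qed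
    then show ?thesis by auto
  qed
  then have "(N \<union> MC) \<inter> cut E ends X = N \<inter> cut E ends X" by auto
  with c1 have "card (N \<inter> cut E ends X) = 1" by simp
  from pm_contract_true[OF mg N this]
  have P: "perfect_matching_on (insert None (Some ` (V - C0 - X))) (contract_E E ends X)
           (contract_ends ends X) {f \<in> N. \<not> ends f \<subseteq> X}" .
  have "vs ` {..<k} = Some ` C0" unfolding C0_def using vsS by (auto simp: image_iff)
  then have "contract_V V X - vs ` {..<k} = insert None (Some ` (V - C0 - X))"
    unfolding contract_V_def by auto
  then show ?thesis using P by auto
qed


lemma card1_mem: "card S = 1 \<Longrightarrow> a \<in> S \<Longrightarrow> S = {a}"
  by (metis card_1_singletonE singletonD)

lemma lift_cycle_none:
  assumes ce: "cycle_extendable V E ends" and tc: "tight_cut V E ends X"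
    and cy: "cyc (contract_V V X) (contract_E E ends X) (contract_ends ends X) k vs es"
    and v0: "vs 0 = None"
  shows "\<exists>M. perfect_matching_on (contract_V V X - vs ` {..<k}) (contract_E E ends X) (contract_ends ends X) M"
proof -
  have mc: "matching_covered V E ends" using ce unfolding cycle_extendable_def by auto
  then have mg: "multigraph V E ends" and evE: "\<forall>e\<in>E. \<exists>M. perfect_matching V E ends M \<and> e \<in> M"
    unfolding matching_covered_def by auto
  have XV: "X \<subseteq> V" using tc unfolding tight_cut_def by auto
  have k2: "2 \<le> k" and evk: "even k" and ivs: "inj_on vs {..<k}" and ies: "inj_on es {..<k}"
    and vsV: "vs ` {..<k} \<subseteq> contract_V V X" and esE: "es ` {..<k} \<subseteq> contract_E E ends X"
    and en: "\<forall>i<k. contract_ends ends X (es i) = {vs i, vs (Suc i mod k)}"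
    using cy unfolding cyc_def by auto
  have esE': "es i \<in> E" "\<not> ends (es i) \<subseteq> X" if "i < k" for i
    using esE that unfolding contract_E_def by auto
  define u where "u i = the (vs i)" for i
  have vsS: "vs i = Some (u i) \<and> u i \<in> V - X" if "0 < i" "i < k" for i
  proof -
    have a: "vs i \<in> contract_V V X" using vsV that by auto
    have b: "vs i \<noteq> None"
    proof
      assume "vs i = None"
      then have "vs i = vs 0" using v0 by simp
      moreover have "i \<in> {..<k}" "0 \<in> {..<k}" using that by auto
      ultimately have "i = 0" using ivs unfolding inj_on_def by blast
      then show False using that by simp
    qed
    from a b show ?thesis unfolding u_def contract_V_def by auto
  qed
  have "contract_ends ends X (es 0) = {vs 0, vs (Suc 0 mod k)}" using en k2 by auto
  also have "Suc 0 mod k = 1" using k2 by auto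
  finally have ce1: "contract_ends ends X (es 0) = {None, Some (u 1)}" using v0 vsS[of 1] k2 by auto
  obtain x1 where x1: "x1 \<in> X" "ends (es 0) = {x1, u 1}" "u 1 \<notin> X"
    using edge_none[OF mg esE'(1) ce1] k2 by auto
  have "contract_ends ends X (es (k - 1)) = {vs (k - 1), vs (Suc (k - 1) mod k)}" using en k2 by auto
  also have "Suc (k - 1) mod k = 0" using k2 by auto
  finally have ce2: "contract_ends ends X (es (k - 1)) = {None, Some (u (k - 1))}"
    using v0 vsS[of "k - 1"] k2 by auto
  obtain x2 where x2: "x2 \<in> X" "ends (es (k - 1)) = {x2, u (k - 1)}" "u (k - 1) \<notin> X"
    using edge_none[OF mg esE'(1) ce2] k2 by auto
  obtain M1 where M1: "perfect_matching V E ends M1" "es 0 \<in> M1" using evE esE'(1)[of 0] k2 by auto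
  obtain M2 where M2: "perfect_matching V E ends M2" "es (k - 1) \<in> M2" using evE esE'(1)[of "k - 1"] k2 by auto
  have cut1: "es 0 \<in> cut E ends X" using cut_iff[OF mg esE'(1), of 0 X] x1 k2 by auto
  have cut2: "es (k - 1) \<in> cut E ends X" using cut_iff[OF mg esE'(1), of "k - 1" X] x2 k2 by auto
  have "card (M1 \<inter> cut E ends X) = 1" using tc M1(1) unfolding tight_cut_def by blast
  then have MC1: "M1 \<inter> cut E ends X = {es 0}"
    by (rule card1_mem) (use M1(2) cut1 in blast)
  have "card (M2 \<inter> cut E ends X) = 1" using tc M2(1) unfolding tight_cut_def by blast
  then have MC2: "M2 \<inter> cut E ends X = {es (k - 1)}"
    by (rule card1_mem) (use M2(2) cut2 in blast)
  have M1E: "M1 \<subseteq> E" and M2E: "M2 \<subseteq> E" using M1 M2 unfolding perfect_matching_on_def by auto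
  have h1: "\<forall>e\<in>M1. \<not> ends e \<subseteq> X \<longrightarrow> ends e \<inter> X \<subseteq> {x1}"
  proof (intro ballI impI)
    fix e assume e: "e \<in> M1" "\<not> ends e \<subseteq> X"
    show "ends e \<inter> X \<subseteq> {x1}"
    proof (cases "ends e \<inter> X = {}")
      case False
      then have "e \<in> cut E ends X" using cut_iff[OF mg, of e X] e M1E by auto
      then have "e = es 0" using MC1 e by auto
      then show ?thesis using x1 by auto
    qed simp
  qed
  have h2: "\<forall>e\<in>M2. \<not> ends e \<subseteq> X \<longrightarrow> ends e \<inter> X \<subseteq> {x2}"
  proof (intro ballI impI)
    fix e assume e: "e \<in> M2" "\<not> ends e \<subseteq> X"
    show "ends e \<inter> X \<subseteq> {x2}"
    proof (cases "ends e \<inter> X = {}")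
      case False
      then have "e \<in> cut E ends X" using cut_iff[OF mg, of e X] e M2E by auto
      then have "e = es (k - 1)" using MC2 e by auto
      then show ?thesis using x2 by auto
    qed simp
  qed
  have g1: "\<not> ends (medge ends M1 x1) \<subseteq> X"
    using medge_unique[OF M1(1) _ M1(2), of x1] x1 XV by auto
  have g2: "\<not> ends (medge ends M2 x2) \<subseteq> X"
    using medge_unique[OF M2(1) _ M2(2), of x2] x2 XV by auto
  obtain L z p where zp: "even L" "z 0 = x2" "z L = x1" "inj_on z {..L}" "z ` {..L} \<subseteq> X"
      "\<forall>j<L. p j \<in> E \<and> ends (p j) = {z j, z (Suc j)}"
    using alt_path[OF mg XV M1(1) M2(1) x1(1) x2(1) h1 h2 g1 g2] by blast
  have zX: "z j \<in> X" if "j \<le> L" for j using zp(5) that by auto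
  have znx1: "z j \<noteq> x1" if "j < L" for j
    using zp(3,4) that unfolding inj_on_def by (metis atMost_iff less_imp_le_nat order_refl less_irrefl)
  define n' where "n' = k + L"
  define v' where "v' i = (if i = 0 then x1 else if i < k then u i else z (i - k))" for i
  define ed' where "ed' i = (if i < k then es i else p (i - k))" for i
  have n'2: "2 \<le> n'" unfolding n'_def using k2 by auto
  have v'0: "v' 0 = x1" unfolding v'_def by simp
  have v'm: "v' i = u i" "u i \<notin> X" "vs i = Some (u i)" "u i \<in> V" if "0 < i" "i < k" for i
    using that vsS[OF that] unfolding v'_def by auto
  have v'h: "v' i = z (i - k)" "z (i - k) \<in> X" "z (i - k) \<noteq> x1" if "k \<le> i" "i < n'" for i
    using that k2 zX[of "i - k"] znx1[of "i - k"] unfolding v'_def n'_def by auto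
  have cV: "cyc V E ends n' v' ed'" unfolding cyc_def
  proof (intro conjI allI impI)
    show "2 \<le> n'" by (fact n'2)
    show "even n'" unfolding n'_def using evk zp(1) by auto
    show "inj_on v' {..<n'}"
    proof (rule inj_onI)
      fix i j assume i: "i \<in> {..<n'}" and j: "j \<in> {..<n'}" and eq: "v' i = v' j"
      have cls: "(i = 0 \<and> v' i = x1) \<or> (0 < i \<and> i < k \<and> v' i \<notin> X) \<or> (k \<le> i \<and> v' i \<in> X \<and> v' i \<noteq> x1)"
        if "i < n'" for i
        using v'0 v'm[of i] v'h[of i] that by (cases "i = 0"; cases "i < k") auto
      show "i = j"
      proof -
        have ci: "(i = 0 \<and> v' i = x1) \<or> (0 < i \<and> i < k \<and> v' i \<notin> X) \<or> (k \<le> i \<and> v' i \<in> X \<and> v' i \<noteq> x1)"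
          using cls i by auto
        have cj: "(j = 0 \<and> v' j = x1) \<or> (0 < j \<and> j < k \<and> v' j \<notin> X) \<or> (k \<le> j \<and> v' j \<in> X \<and> v' j \<noteq> x1)"
          using cls j by auto
        have "i = 0 \<and> j = 0 \<or> (0 < i \<and> i < k \<and> 0 < j \<and> j < k) \<or> (k \<le> i \<and> k \<le> j)"
          using ci cj eq x1(1) by auto
        moreover have "i = j" if "0 < i" "i < k" "0 < j" "j < k"
        proof -
          have "vs i = vs j" using v'm[of i] v'm[of j] that eq by simp
          then show ?thesis using ivs that unfolding inj_on_def by auto
        qed
        moreover have "i = j" if "k \<le> i" "k \<le> j"
        proof -
          have "z (i - k) = z (j - k)" using v'h[of i] v'h[of j] that eq i j by simp
          moreover have "i - k \<in> {..L}" "j - k \<in> {..L}" using i j unfolding n'_def by auto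
          ultimately have "i - k = j - k" using zp(4) unfolding inj_on_def by blast
          then show ?thesis using that by simp
        qed
        ultimately show ?thesis by blast
      qed
    qed
    show "inj_on ed' {..<n'}"
    proof (rule inj_onI)
      fix i j assume i: "i \<in> {..<n'}" and j: "j \<in> {..<n'}" and eq: "ed' i = ed' j"
      have pX: "ends (p a) \<subseteq> X" if "a < L" for a using zp(6) zX[of a] zX[of "Suc a"] that by auto
      show "i = j"
      proof (cases "i < k")
        case True
        note iT = True
        show ?thesis
        proof (cases "j < k")
          case True
          then show ?thesis using iT eq ies unfolding ed'_def inj_on_def by auto
        next
          case False
          then have "es i = p (j - k)" using iT eq unfolding ed'_def by auto
          moreover have "j - k < L" using j False unfolding n'_def by auto
          ultimately show ?thesis using pX esE'(2)[OF iT] by metis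
        qed
      next
        case False
        note iF = False
        show ?thesis
        proof (cases "j < k")
          case True
          then have "es j = p (i - k)" using iF eq unfolding ed'_def by auto
          moreover have "i - k < L" using i iF unfolding n'_def by auto
          ultimately show ?thesis using pX esE'(2)[OF True] by metis
        next
          case False
          have a: "i - k < L" "j - k < L" using i j iF False unfolding n'_def by auto
          have "p (i - k) = p (j - k)" using eq iF False unfolding ed'_def by auto
          then have "{z (i - k), z (Suc (i - k))} = {z (j - k), z (Suc (j - k))}" using zp(6) a by metis
          moreover have "i - k \<in> {..L}" "j - k \<in> {..L}" "Suc (i - k) \<in> {..L}" "Suc (j - k) \<in> {..L}"
            using a by auto
          ultimately have "i - k = j - k \<or> (i - k = Suc (j - k) \<and> Suc (i - k) = j - k)"
            using zp(4) unfolding inj_on_def doubleton_eq_iff by blast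
          then show ?thesis using iF False by auto
        qed
      qed
    qed
    show "v' ` {..<n'} \<subseteq> V"
    proof
      fix w assume "w \<in> v' ` {..<n'}"
      then obtain i where i: "i < n'" "w = v' i" by auto
      show "w \<in> V" using v'0 v'm[of i] v'h[of i] x1(1) XV i by (cases "i = 0"; cases "i < k") auto
    qed
    show "ed' ` {..<n'} \<subseteq> E"
    proof
      fix f assume "f \<in> ed' ` {..<n'}"
      then obtain i where i: "i < n'" "f = ed' i" by auto
      show "f \<in> E"
      proof (cases "i < k")
        case True then show ?thesis using i esE' unfolding ed'_def by auto
      next
        case False
        then have "i - k < L" using i unfolding n'_def by auto
        then show ?thesis using i zp(6) False unfolding ed'_def by auto
      qed
    qed
    fix i assume i: "i < n'"
    show "ends (ed' i) = {v' i, v' (Suc i mod n')}"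
    proof (cases "i = 0")
      case True
      have "Suc 0 mod n' = 1" using n'2 by auto
      then show ?thesis using True x1 v'0 v'm[of 1] k2 unfolding ed'_def by auto
    next
      case i0: False
      show ?thesis
      proof (cases "Suc i < k")
        case True
        have sm: "Suc i mod n' = Suc i" using True unfolding n'_def by auto
        have "contract_ends ends X (es i) = {vs i, vs (Suc i mod k)}" using en True by auto
        also have "Suc i mod k = Suc i" using True by auto
        finally have "contract_ends ends X (es i) = {Some (u i), Some (u (Suc i))}"
          using vsS[of i] vsS[of "Suc i"] i0 True by auto
        then have "ends (es i) = {u i, u (Suc i)}" using edge_some[OF mg esE'(1)] True by auto
        then show ?thesis using sm v'm[of i] v'm[of "Suc i"] i0 True unfolding ed'_def by auto
      next
        case False
        show ?thesis
        proof (cases "Suc i = k")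
          case True
          have ik: "i = k - 1" using True by auto
          have "v' (Suc i mod n') = x2"
          proof (cases "L = 0")
            case True
            then have "Suc i mod n' = 0" using \<open>Suc i = k\<close> unfolding n'_def by auto
            then show ?thesis using v'0 zp(2,3) True by auto
          next
            case False
            then have "Suc i mod n' = k" using \<open>Suc i = k\<close> unfolding n'_def by auto
            then show ?thesis using v'h[of k] zp(2) False unfolding n'_def by auto
          qed
          moreover have "ends (ed' i) = {x2, u i}" using x2 ik k2 unfolding ed'_def by auto
          moreover have "v' i = u i" using v'm[of i] i0 True by auto
          ultimately show ?thesis by auto
        next
          case False
          then have ki: "k \<le> i" using \<open>\<not> Suc i < k\<close> by auto
          have a: "i - k < L" using i ki unfolding n'_def by auto
          have e: "ends (ed' i) = {z (i - k), z (Suc (i - k))}" using zp(6) a ki unfolding ed'_def by auto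
          have "v' (Suc i mod n') = z (Suc (i - k))"
          proof (cases "Suc i < n'")
            case True
            then have "Suc i mod n' = Suc i" by auto
            then show ?thesis using v'h[of "Suc i"] True ki by (simp add: Suc_diff_le)
          next
            case False
            then have "Suc i = n'" using i by auto
            then have "Suc i mod n' = 0" "Suc (i - k) = L" using ki unfolding n'_def by auto
            then show ?thesis using v'0 zp(3) by simp
          qed
          then show ?thesis using e v'h[of i] ki i by simp
        qed
      qed
    qed
  qed
  define C2 where "C2 = v' ` {..<n'}"
  have "even_cycle_vertices V E ends C2" unfolding even_cycle_cyc C2_def using cV by blast
  then obtain N where N: "perfect_matching_on (V - C2) E ends N"
    using ce unfolding cycle_extendable_def by blast
  define MC where "MC = ed' ` {i. i < n' \<and> even i}"
  have MC: "perfect_matching_on C2 E ends MC" unfolding MC_def C2_def by (rule cyc_match[OF cV])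
  have C2V: "C2 \<subseteq> V" using cV unfolding cyc_def C2_def by auto
  have "perfect_matching_on ((V - C2) \<union> C2) E ends (N \<union> MC)" by (rule pm_union[OF N MC]) auto
  moreover have "(V - C2) \<union> C2 = V" using C2V by auto
  ultimately have "perfect_matching V E ends (N \<union> MC)" by simp
  then have c1: "card ((N \<union> MC) \<inter> cut E ends X) = 1" using tc unfolding tight_cut_def by auto
  have e1MC: "es 0 \<in> MC" unfolding MC_def using n'2 k2
    by (metis (mono_tags, lifting) ed'_def even_zero gr0I mem_Collect_eq image_eqI le_zero_eq numeral_le_iff zero_neq_numeral semiring_norm(69))
  have cs: "(N \<union> MC) \<inter> cut E ends X = {es 0}" using card1_mem[OF c1] e1MC cut1 by auto
  have x1C2: "x1 \<in> C2" unfolding C2_def using v'0 n'2 by force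
  have NC: "N \<inter> cut E ends X = {}"
  proof (rule ccontr)
    assume "N \<inter> cut E ends X \<noteq> {}"
    then obtain f where f: "f \<in> N" "f \<in> cut E ends X" by auto
    then have "f \<in> (N \<union> MC) \<inter> cut E ends X" by blast
    then have "f = es 0" using cs by blast
    then have "es 0 \<in> N" using f by simp
    then have "ends (es 0) \<subseteq> V - C2" using N unfolding perfect_matching_on_def by auto
    then show False using x1 x1C2 by auto
  qed
  from pm_contract_false[OF mg N NC]
  have P: "perfect_matching_on (Some ` (V - C2 - X)) (contract_E E ends X)
           (contract_ends ends X) {f \<in> N. \<not> ends f \<subseteq> X}" .
  have key: "w \<in> C2 \<longleftrightarrow> Some w \<in> vs ` {..<k}" if w: "w \<in> V" "w \<notin> X" for w
  proof
    assume "w \<in> C2"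
    then obtain i where i: "i < n'" "w = v' i" unfolding C2_def by auto
    have "0 < i \<and> i < k"
      using i w v'0 v'h[of i] x1(1) by (cases "i = 0"; cases "i < k") auto
    then have "vs i = Some w" "i \<in> {..<k}" using v'm[of i] i by auto
    then show "Some w \<in> vs ` {..<k}" by (metis image_eqI)
  next
    assume "Some w \<in> vs ` {..<k}"
    then obtain i where i: "i < k" "vs i = Some w" by auto
    then have "i \<noteq> 0" using v0 by (metis option.distinct(1))
    then have "v' i = w" using v'm[of i] i by auto
    then show "w \<in> C2" unfolding C2_def n'_def using i by auto
  qed
  have "None \<in> vs ` {..<k}" using image_eqI[of None vs 0 "{..<k}"] v0 k2 by simp
  then have "contract_V V X - vs ` {..<k} = Some ` (V - C2 - X)"
    unfolding contract_V_def using key by auto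
  then show ?thesis using P by auto
qed


lemma main_one:
  assumes ce: "cycle_extendable V E ends" and tc: "tight_cut V E ends X"
    and X: "X \<noteq> {}" "V - X \<noteq> {}"
  shows "cycle_extendable (contract_V V X) (contract_E E ends X) (contract_ends ends X)"
  unfolding cycle_extendable_def
proof (intro conjI allI impI)
  have mc: "matching_covered V E ends" using ce unfolding cycle_extendable_def by auto
  show "matching_covered (contract_V V X) (contract_E E ends X) (contract_ends ends X)"
    by (rule contract_mc[OF mc tc X])
  fix C assume "even_cycle_vertices (contract_V V X) (contract_E E ends X) (contract_ends ends X) C"
  then obtain k vs es where cy: "cyc (contract_V V X) (contract_E E ends X) (contract_ends ends X) k vs es"
    and C: "C = vs ` {..<k}" unfolding even_cycle_cyc by blast
  show "\<exists>M. perfect_matching_on (contract_V V X - C) (contract_E E ends X) (contract_ends ends X) M"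
  proof (cases "None \<in> vs ` {..<k}")
    case True
    then obtain r where r: "r < k" "vs r = None" by auto
    let ?vs = "\<lambda>i. vs ((i + r) mod k)" and ?es = "\<lambda>i. es ((i + r) mod k)"
    have cy2: "cyc (contract_V V X) (contract_E E ends X) (contract_ends ends X) k ?vs ?es"
      and im: "?vs ` {..<k} = vs ` {..<k}" using cyc_shift[OF cy r(1)] by auto
    have "?vs 0 = None" using r by simp
    from lift_cycle_none[OF ce tc cy2 this] show ?thesis unfolding C im .
  next
    case False
    from lift_cycle_some[OF ce tc cy False] show ?thesis unfolding C .
  qed
qed

theorem lemma2p4:
  fixes V :: "'v set" and E :: "'e set" and ends :: "'e \<Rightarrow> 'v set" and X :: "'v set"
  assumes "matching_covered V E ends"
    and "tight_cut V E ends X"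
    and "nontrivial_cut V X"
    and "cycle_extendable V E ends"
  shows "cycle_extendable (contract_V V X) (contract_E E ends X) (contract_ends ends X)
       \<and> cycle_extendable (contract_V V (V - X)) (contract_E E ends (V - X))
                          (contract_ends ends (V - X))"
proof
  have mg: "multigraph V E ends" using assms(1) unfolding matching_covered_def by auto
  have XV: "X \<subseteq> V" using assms(2) unfolding tight_cut_def by auto
  have c: "card X \<ge> 2" "card (V - X) \<ge> 2" using assms(3) unfolding nontrivial_cut_def by auto
  have X0: "X \<noteq> {}" using c(1) by (metis card.empty not_numeral_le_zero)
  have X1: "V - X \<noteq> {}" using c(2) by (metis card.empty not_numeral_le_zero)
  show "cycle_extendable (contract_V V X) (contract_E E ends X) (contract_ends ends X)"
    by (rule main_one[OF assms(4) assms(2) X0 X1])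
  have "V - (V - X) = X" using XV by auto
  then have X2: "V - (V - X) \<noteq> {}" using X0 by simp
  show "cycle_extendable (contract_V V (V - X)) (contract_E E ends (V - X)) (contract_ends ends (V - X))"
    by (rule main_one[OF assms(4) tight_compl[OF mg assms(2)] X1 X2])
qed

end
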